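(* Let $\mathbb{M}$ be a weight sequence with sequence of quotients $\mathbf{m}$. Then (i) $\alpha(\nu_{\mathbf{m}})\ge\alpha(\omega_{\mathbb{M}})$, and (ii) $\beta(\nu_{\mathbf{m}})=\beta(\omega_{\mathbb{M}})$.
   Context: A weight sequence is $\mathbb{M}=(M_p)_{p\in\mathbb{N}_0}$ of positive reals with $M_0=1$, $M_p^2\le M_{p-1}M_{p+1}$ ($p\ge1$) and $M_p^{1/p}\to\infty$; $m_p=M_{p+1}/M_p$. $\omega_{\mathbb{M}}(t):=\sup_{p\in\mathbb{N}_0}\log(t^p/M_p)$ for $t>0$, $\omega_{\mathbb{M}}(0)=0$; $\nu_{\mathbf{m}}(t):=\#\{j\in\mathbb{N}_0:m_j\le t\}$ for $t>0$. For a positive measurable $f$ on $[A,\infty)$: $\alpha(f):=\inf\{\alpha:\exists C_\alpha>0\ \forall\Lambda>1,\ \limsup_{x\to\infty}\sup_{\lambda\in[1,\Lambda]}\frac{f(\lambda x)}{\lambda^{\alpha}f(x)}\le C_\alpha\}$ and $\beta(f):=\sup\{\beta:\exists D_\beta>0\ \forall\Lambda>1,\ \liminf_{x\to\infty}\inf_{\lambda\in[1,\Lambda]}\frac{f(\lambda x)}{\lambda^{\beta}f(x)}\ge D_\beta\}$ (with $\inf\emptyset=\infty$); for $\omega_{\mathbb{M}}$ and $\nu_{\mathbf{m}}$ these are computed on any interval $[A,\infty)$, $A>0$, where the function is positive. *)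

theory Defs
  imports "HOL-Analysis.Analysis"
begin

definition weight_sequence :: "(nat \<Rightarrow> real) \<Rightarrow> bool" where
  "weight_sequence M \<longleftrightarrow>
     (\<forall>p. M p > 0) \<and> M 0 = 1 \<and>
     (\<forall>p\<ge>1. (M p)^2 \<le> M (p - 1) * M (p + 1)) \<and>
     filterlim (\<lambda>p. root p (M p)) at_top sequentially"

definition quotients :: "(nat \<Rightarrow> real) \<Rightarrow> nat \<Rightarrow> real" where
  "quotients M p = M (p + 1) / M p"

definition omega_M :: "(nat \<Rightarrow> real) \<Rightarrow> real \<Rightarrow> real" where
  "omega_M M t = (if t \<le> 0 then 0 else (SUP p::nat. ln (t ^ p / M p)))"

definition nu_m :: "(nat \<Rightarrow> real) \<Rightarrow> real \<Rightarrow> real" where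
  "nu_m m t = real (card {j::nat. m j \<le> t})"

definition alpha_index :: "(real \<Rightarrow> real) \<Rightarrow> ereal" where
  "alpha_index f = Inf {ereal a | a. \<exists>C>0. \<forall>\<Lambda>>1.
      Limsup at_top (\<lambda>x. SUP l\<in>{1..\<Lambda>}. ereal (f (l * x) / (l powr a * f x))) \<le> ereal C}"

definition beta_index :: "(real \<Rightarrow> real) \<Rightarrow> ereal" where
  "beta_index f = Sup {ereal b | b. \<exists>D>0. \<forall>\<Lambda>>1.
      Liminf at_top (\<lambda>x. INF l\<in>{1..\<Lambda>}. ereal (f (l * x) / (l powr b * f x))) \<ge> ereal D}"

end

theory Submission
  imports Defs
begin


locale wseq =
  fixes M :: "nat \<Rightarrow> real"
  assumes ws: "weight_sequence M"
begin

lemma M_pos: "M p > 0" using ws unfolding weight_sequence_def by auto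

lemma m_pos: "quotients M p > 0" using M_pos unfolding quotients_def by simp

lemma m_Suc: "quotients M p \<le> quotients M (Suc p)"
proof -
  have all: "\<forall>q\<ge>1. (M q)^2 \<le> M (q - 1) * M (q + 1)" using ws unfolding weight_sequence_def by blast
  have h: "(M (Suc p))^2 \<le> M p * M (Suc (Suc p))" using all[rule_format, of "Suc p"] by simp
  have a: "M p > 0" "M (Suc p) > 0" "M (Suc (Suc p)) > 0" using M_pos by auto
  have h2: "M (Suc p) * M (Suc p) \<le> M (Suc (Suc p)) * M p" using h by (simp add: power2_eq_square mult.commute)
  have "M (Suc p) \<le> M (Suc (Suc p)) * M p / M (Suc p)" by (rule mult_imp_le_div_pos[OF a(2) h2])
  then have "M (Suc p) \<le> (M (Suc (Suc p)) / M (Suc p)) * M p" by simp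
  then have "M (Suc p) / M p \<le> M (Suc (Suc p)) / M (Suc p)" by (rule mult_imp_div_pos_le[OF a(1)])
  then show ?thesis unfolding quotients_def by simp
qed

lemma m_mono: "i \<le> j \<Longrightarrow> quotients M i \<le> quotients M j"
  using m_Suc by (rule lift_Suc_mono_le)

lemma M_prod: "M p = (\<Prod>j<p. quotients M j)"
proof (induction p)
  case 0 then show ?case using ws unfolding weight_sequence_def by simp
next
  case (Suc p)
  have "M (Suc p) = quotients M p * M p" using M_pos[of p] by (simp add: quotients_def)
  then show ?case using Suc by (simp add: mult.commute)
qed

lemma m_unbounded: "\<exists>j. quotients M j > t"
proof -
  have "filterlim (\<lambda>p. root p (M p)) at_top sequentially" using ws unfolding weight_sequence_def by auto
  then have e1: "eventually (\<lambda>p. t < root p (M p)) sequentially" unfolding filterlim_at_top_dense by blast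
  have "eventually (\<lambda>p. t < root p (M p) \<and> 1 \<le> p) sequentially"
    by (rule eventually_conj[OF e1 eventually_ge_at_top[of "1::nat"]])
  then obtain N where N: "\<forall>n\<ge>N. t < root n (M n) \<and> 1 \<le> n" unfolding eventually_sequentially by blast
  define p where "p = N"
  have p: "root p (M p) > t" "p \<ge> 1" using N unfolding p_def by auto
  have "M p = (\<Prod>j<p. quotients M j)" by (rule M_prod)
  also have "\<dots> \<le> (\<Prod>j<p. quotients M (p-1))"
  proof (rule prod_mono)
    fix i assume "i \<in> {..<p}"
    then show "0 \<le> quotients M i \<and> quotients M i \<le> quotients M (p - 1)"
      using m_pos[of i] m_mono[of i "p-1"] by auto
  qed
  also have "\<dots> = quotients M (p-1) ^ p" by simp
  finally have "root p (M p) \<le> root p (quotients M (p-1) ^ p)"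
    using p(2) by (simp)
  also have "\<dots> = quotients M (p-1)" using p(2) m_pos[of "p-1"] by (simp add: real_root_pos2)
  finally have "t < quotients M (p-1)" using p(1) by linarith
  then show ?thesis by blast
qed

lemma trans3: "a = b \<Longrightarrow> b = c \<Longrightarrow> c = d \<Longrightarrow> a = d" by simp

definition cnt :: "real \<Rightarrow> nat" where "cnt t = card {j. quotients M j \<le> t}"

lemma cnt_set: "{j. quotients M j \<le> t} = {..<cnt t}"
proof -
  obtain J where J: "quotients M J > t" using m_unbounded by blast
  define k where "k = (LEAST j. quotients M j > t)"
  have k: "quotients M k > t" unfolding k_def by (rule LeastI[of _ J]) (rule J)
  have "{j. quotients M j \<le> t} = {..<k}"
  proof (intro set_eqI iffI)
    fix j assume "j \<in> {j. quotients M j \<le> t}"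
    then show "j \<in> {..<k}" using m_mono[of k j] k by (cases "k \<le> j") auto
  next
    fix j assume "j \<in> {..<k}"
    then show "j \<in> {j. quotients M j \<le> t}" using not_less_Least[of j "\<lambda>j. quotients M j > t"]
      unfolding k_def by auto
  qed
  then show ?thesis unfolding cnt_def by (simp only: card_lessThan)
qed

lemma cnt_iff: "quotients M j \<le> t \<longleftrightarrow> j < cnt t"
proof -
  have "(j \<in> {j. quotients M j \<le> t}) = (j \<in> {..<cnt t})" by (simp only: cnt_set)
  then show ?thesis by simp
qed

lemma cnt_eqI: "(\<And>j. quotients M j \<le> t \<longleftrightarrow> j < k) \<Longrightarrow> cnt t = k"
  proof -
  assume h: "\<And>j. quotients M j \<le> t \<longleftrightarrow> j < k"
  have "{j. quotients M j \<le> t} = {..<k}" using h by auto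
  then show ?thesis unfolding cnt_def by simp
qed

lemma cnt_mono: "s \<le> t \<Longrightarrow> cnt s \<le> cnt t"
proof (rule ccontr)
  assume st: "s \<le> t" and "\<not> cnt s \<le> cnt t"
  then have "cnt t < cnt s" by simp
  then have "quotients M (cnt t) \<le> s" using cnt_iff[of "cnt t" s] by simp
  then have "quotients M (cnt t) \<le> t" using st by simp
  then show False using cnt_iff[of "cnt t" t] by simp
qed

lemma nu_eq: "nu_m (quotients M) t = real (cnt t)"
  unfolding nu_m_def cnt_def by simp

lemma ln_term: "t > 0 \<Longrightarrow> ln (t ^ p / M p) = (\<Sum>j<p. ln (t / quotients M j))"
proof -
  assume t: "t > 0"
  have e1: "t ^ p / M p = t ^ p / (\<Prod>j<p. quotients M j)"
    using M_prod[of p] by (rule arg_cong[where f="\<lambda>x. t ^ p / x"])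
  have e2: "(\<Prod>j<p. t / quotients M j) = (\<Prod>j<p. t) / (\<Prod>j<p. quotients M j)" by (rule prod_dividef)
  have e3: "(\<Prod>j<p. t) = t ^ p" by simp
  have "t ^ p / M p = (\<Prod>j<p. t / quotients M j)" using e1 e2 e3 by simp
  then have "ln (t ^ p / M p) = ln (\<Prod>j<p. t / quotients M j)" by simp
  also have "\<dots> = (\<Sum>j<p. ln (t / quotients M j))"
  proof (rule ln_prod)
    fix i show "t / quotients M i \<noteq> 0" using t m_pos[of i] by simp
  qed simp
  finally show ?thesis .
qed

lemma om_rep: "t > 0 \<Longrightarrow> omega_M M t = (\<Sum>j<cnt t. ln (t / quotients M j))"
proof -
  assume t: "t > 0"
  let ?F = "\<lambda>p. (\<Sum>j<p. ln (t / quotients M j))"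
  have le: "?F p \<le> ?F (cnt t)" for p
  proof (cases "p \<le> cnt t")
    case True
    have "?F (cnt t) = ?F p + (\<Sum>j\<in>{p..<cnt t}. ln (t / quotients M j))"
      using sum.atLeastLessThan_concat[of 0 p "cnt t" "\<lambda>j. ln (t / quotients M j)"] True by (simp add: atLeast0LessThan)
    moreover have "(\<Sum>j\<in>{p..<cnt t}. ln (t / quotients M j)) \<ge> 0"
    proof (rule sum_nonneg)
      fix j assume "j \<in> {p..<cnt t}"
      then have "quotients M j \<le> t" using cnt_iff[of j t] by auto
      then show "ln (t / quotients M j) \<ge> 0" using t m_pos[of j] by simp
    qed
    ultimately show ?thesis by simp
  next
    case False
    have "?F p = ?F (cnt t) + (\<Sum>j\<in>{cnt t..<p}. ln (t / quotients M j))"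
      using sum.atLeastLessThan_concat[of 0 "cnt t" p "\<lambda>j. ln (t / quotients M j)"] False by (simp add: atLeast0LessThan)
    moreover have "(\<Sum>j\<in>{cnt t..<p}. ln (t / quotients M j)) \<le> 0"
    proof (rule sum_nonpos)
      fix j assume "j \<in> {cnt t..<p}"
      then have "quotients M j > t" using cnt_iff[of j t] by auto
      then show "ln (t / quotients M j) \<le> 0" using t m_pos[of j] by simp
    qed
    ultimately show ?thesis by simp
  qed
  have A: "(SUP p::nat. ln (t ^ p / M p)) = (SUP p::nat. ?F p)" by (simp only: ln_term[OF t])
  have B: "(SUP p::nat. ?F p) = ?F (cnt t)"
  proof (rule cSup_eq_maximum)
    show "?F (cnt t) \<in> range ?F" by (rule rangeI)
    fix x assume "x \<in> range ?F"
    then obtain p where "x = ?F p" by blast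
    then show "x \<le> ?F (cnt t)" using le[of p] by simp
  qed
  have C: "omega_M M t = (SUP p::nat. ln (t ^ p / M p))" unfolding omega_M_def
    by (rule if_not_P) (use t in simp)
  show ?thesis using C A B by (rule trans3)
qed

lemma om_rep2: "t > 0 \<Longrightarrow> cnt t \<le> N \<Longrightarrow> omega_M M t = (\<Sum>j<N. max 0 (ln (t / quotients M j)))"
proof -
  assume t: "t > 0" and N: "cnt t \<le> N"
  have "(\<Sum>j<N. max 0 (ln (t / quotients M j))) = (\<Sum>j<N. if j < cnt t then ln (t / quotients M j) else 0)"
  proof (rule sum.cong)
    fix j assume "j \<in> {..<N}"
    show "max 0 (ln (t / quotients M j)) = (if j < cnt t then ln (t / quotients M j) else 0)"
    proof (cases "j < cnt t")
      case True
      then have "quotients M j \<le> t" using cnt_iff[of j t] by auto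
      then show ?thesis using True t m_pos[of j] by simp
    next
      case False
      then have "quotients M j > t" using cnt_iff[of j t] by auto
      then show ?thesis using False t m_pos[of j] by simp
    qed
  qed simp
  also have "\<dots> = (\<Sum>j\<in>{..<N} \<inter> {j. j < cnt t}. ln (t / quotients M j))"
    by (simp add: sum.inter_restrict)
  also have "{..<N} \<inter> {j. j < cnt t} = {..<cnt t}" using N by auto
  finally show ?thesis using om_rep t by simp
qed

lemma om_nonneg: "omega_M M t \<ge> 0"
proof (cases "t > 0")
  case True
  have e: "omega_M M t = (\<Sum>j<cnt t. max 0 (ln (t / quotients M j)))" using om_rep2[OF True order.refl] .
  have "0 \<le> (\<Sum>j<cnt t. max 0 (ln (t / quotients M j)))" by (rule sum_nonneg) simp
  then show ?thesis using e by simp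
next
  case False
  then have "t \<le> 0" by simp
  then have "omega_M M t = 0" unfolding omega_M_def by (rule if_P)
  then show ?thesis by simp
qed

lemma om_mono: "s \<le> t \<Longrightarrow> omega_M M s \<le> omega_M M t"
proof (cases "s > 0")
  case True
  assume st: "s \<le> t"
  have "omega_M M s = (\<Sum>j<cnt t. max 0 (ln (s / quotients M j)))" using om_rep2[OF True cnt_mono[OF st]] .
  also have "\<dots> \<le> (\<Sum>j<cnt t. max 0 (ln (t / quotients M j)))"
  proof (rule sum_mono)
    fix j
    have "s / quotients M j \<le> t / quotients M j" using st m_pos[of j] by (simp add: divide_right_mono)
    moreover have "s / quotients M j > 0" using True m_pos[of j] by simp
    ultimately have "ln (s / quotients M j) \<le> ln (t / quotients M j)" by simp
    then show "max 0 (ln (s / quotients M j)) \<le> max 0 (ln (t / quotients M j))"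
      by (simp add: max.coboundedI2)
  qed
  also have "\<dots> = omega_M M t" using om_rep2[of t "cnt t"] True st by simp
  finally show ?thesis .
next
  case False
  then have "s \<le> 0" by simp
  then have "omega_M M s = 0" unfolding omega_M_def by (rule if_P)
  then show ?thesis using om_nonneg[of t] by simp
qed

lemma om_ge: "t \<ge> quotients M 0 \<Longrightarrow> omega_M M t \<ge> ln (t / quotients M 0)"
proof -
  assume t: "t \<ge> quotients M 0"
  have tp: "t > 0" using t m_pos[of 0] by simp
  have c: "cnt t \<ge> 1" using cnt_iff[of 0 t] t by simp
  have "omega_M M t = (\<Sum>j<cnt t. max 0 (ln (t / quotients M j)))" using om_rep2 tp by simp
  also have "\<dots> \<ge> (\<Sum>j\<in>{0}. max 0 (ln (t / quotients M j)))"
    by (rule sum_mono2) (use c in auto)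
  finally show ?thesis by simp
qed

lemma om_tendsto: "eventually (\<lambda>x. omega_M M x \<ge> K) at_top"
proof -
  have "eventually (\<lambda>x. x \<ge> max (quotients M 0) (quotients M 0 * exp K)) at_top" by (rule eventually_ge_at_top)
  then show ?thesis
  proof (rule eventually_mono)
    fix x assume x: "x \<ge> max (quotients M 0) (quotients M 0 * exp K)"
    have q0: "quotients M 0 > 0" by (rule m_pos)
    have "exp K \<le> x / quotients M 0" using x q0 by (simp add: pos_le_divide_eq mult.commute)
    moreover have "x / quotients M 0 > 0" using x q0 by (simp add: less_le_trans[OF q0])
    ultimately have "ln (exp K) \<le> ln (x / quotients M 0)" using ln_le_cancel_iff[of "exp K" "x / quotients M 0"] by simp
    then have "K \<le> ln (x / quotients M 0)" by simp
    then show "omega_M M x \<ge> K" using om_ge[of x] x by simp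
  qed
qed

lemma cnt_pos: "t \<ge> quotients M 0 \<Longrightarrow> cnt t > 0"
  using cnt_iff[of 0 t] by simp

lemma om_deriv: "t > 0 \<Longrightarrow> t \<notin> range (quotients M) \<Longrightarrow> (omega_M M has_real_derivative real (cnt t) / t) (at t)"
proof -
  assume t: "t > 0" and nr: "t \<notin> range (quotients M)"
  define n where "n = cnt t"
  define lo where "lo = (if n = 0 then 0 else quotients M (n - 1))"
  have lo0: "lo \<ge> 0" unfolding lo_def using m_pos less_imp_le by auto
  have hi: "quotients M n > t" using cnt_iff[of n t] unfolding n_def by simp
  have lot: "lo < t"
  proof (cases "n = 0")
    case True then show ?thesis using t by (simp add: lo_def)
  next
    case False
    then have "quotients M (n-1) \<le> t" using cnt_iff[of "n-1" t] unfolding n_def by simp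
    moreover have "quotients M (n-1) \<noteq> t" using nr by auto
    ultimately show ?thesis using False by (simp add: lo_def)
  qed
  have eq: "omega_M M s = real n * ln s - (\<Sum>j<n. ln (quotients M j))" if s: "s \<in> {lo<..<quotients M n}" for s
  proof -
    have sp: "s > 0" using s lo0 by simp
    have "cnt s = n"
    proof (rule cnt_eqI)
      fix j show "quotients M j \<le> s \<longleftrightarrow> j < n"
      proof
        assume "quotients M j \<le> s"
        then show "j < n" using m_mono[of n j] s by (cases "n \<le> j") auto
      next
        assume j: "j < n"
        then have "quotients M j \<le> lo" using m_mono[of j "n-1"] by (simp add: lo_def)
        then show "quotients M j \<le> s" using s by simp
      qed
    qed
    then have "omega_M M s = (\<Sum>j<n. ln (s / quotients M j))" using om_rep sp by simp
    also have "\<dots> = (\<Sum>j<n. ln s - ln (quotients M j))"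
    proof (rule sum.cong)
      fix j show "ln (s / quotients M j) = ln s - ln (quotients M j)" using sp m_pos[of j] by (rule ln_divide_pos)
    qed simp
    finally show ?thesis by (simp add: sum_subtractf)
  qed
  have d: "(ln has_real_derivative inverse t) (at t)" using t by (rule DERIV_ln)
  have d2: "((\<lambda>s. real n * ln s - (\<Sum>j<n. ln (quotients M j))) has_real_derivative real n * inverse t - 0) (at t)"
    by (intro DERIV_diff DERIV_cmult DERIV_const d)
  have d3: "((\<lambda>s. real n * ln s - (\<Sum>j<n. ln (quotients M j))) has_real_derivative real (cnt t) / t) (at t)"
    using d2 by (simp add: n_def divide_inverse)
  show ?thesis
  proof (rule has_field_derivative_transform_within_open[OF d3])
    show "open {lo<..<quotients M n}" by simp
    show "t \<in> {lo<..<quotients M n}" using lot hi by simp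
    fix x assume "x \<in> {lo<..<quotients M n}"
    then show "real n * ln x - (\<Sum>j<n. ln (quotients M j)) = omega_M M x" using eq by simp
  qed
qed

lemma om_cont: "0 < a \<Longrightarrow> 0 < l \<Longrightarrow> continuous_on {a..b} (\<lambda>u. omega_M M (l * u))"
proof -
  assume a: "0 < a" and l: "0 < l"
  define N where "N = cnt (l * b)"
  have eq: "omega_M M (l * u) = (\<Sum>j<N. max 0 (ln (l * u / quotients M j)))" if u: "u \<in> {a..b}" for u
  proof (rule om_rep2)
    show "0 < l * u" using u a l by simp
    show "cnt (l * u) \<le> N" unfolding N_def using u l by (intro cnt_mono) simp
  qed
  have c: "continuous_on {a..b} (\<lambda>u. (\<Sum>j<N. max 0 (ln (l * u / quotients M j))))"
    using a l m_pos by (intro continuous_intros ballI) (auto simp: less_imp_neq[symmetric])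
  show ?thesis by (rule continuous_on_cong[THEN iffD1, OF refl _ c]) (use eq in simp)
qed

lemma om_int: "0 < l \<Longrightarrow> 0 < a \<Longrightarrow> a \<le> b \<Longrightarrow>
  ((\<lambda>u. real (cnt (l * u)) / u) has_integral (omega_M M (l * b) - omega_M M (l * a))) {a..b}"
proof -
  assume l: "0 < l" and a: "0 < a" and ab: "a \<le> b"
  define N where "N = cnt (l * b)"
  define S where "S = (\<lambda>j. quotients M j / l) ` {..<N}"
  have fS: "finite S" unfolding S_def by simp
  show ?thesis
  proof (rule fundamental_theorem_of_calculus_interior_strong[OF fS ab, where f="\<lambda>u. omega_M M (l * u)"])
    show "continuous_on {a..b} (\<lambda>u. omega_M M (l * u))" using om_cont a l by blast
  next
    fix x assume x: "x \<in> {a<..<b} - S"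
    have lx: "0 < l * x" using x a l by simp
    have nr: "l * x \<notin> range (quotients M)"
    proof
      assume "l * x \<in> range (quotients M)"
      then obtain j where j: "l * x = quotients M j" by auto
      have "l * x \<le> l * b" using x l by (intro mult_left_mono) auto
      then have "quotients M j \<le> l * b" using j by simp
      then have "j < N" unfolding N_def using cnt_iff by blast
      moreover have "x = quotients M j / l" using j l by (simp add: field_simps)
      ultimately have "x \<in> S" unfolding S_def by blast
      then show False using x by blast
    qed
    have d1: "(omega_M M has_real_derivative real (cnt (l * x)) / (l * x)) (at (l * x))"
      by (rule om_deriv[OF lx nr])
    have d2: "((\<lambda>u. l * u) has_real_derivative l) (at x)"
      using DERIV_cmult[OF DERIV_ident, of l] by simp
    have "((\<lambda>u. omega_M M (l * u)) has_real_derivative real (cnt (l * x)) / (l * x) * l) (at x)"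
      by (rule DERIV_chain'[OF d2 d1])
    moreover have "real (cnt (l * x)) / (l * x) * l = real (cnt (l * x)) / x" using l by simp
    ultimately have "((\<lambda>u. omega_M M (l * u)) has_real_derivative real (cnt (l * x)) / x) (at x)" by simp
    then show "((\<lambda>u. omega_M M (l * u)) has_vector_derivative real (cnt (l * x)) / x) (at x)"
      by (simp add: has_real_derivative_iff_has_vector_derivative)
  qed
qed

lemma om_int1: "0 < a \<Longrightarrow> a \<le> b \<Longrightarrow>
  ((\<lambda>u. real (cnt u) / u) has_integral (omega_M M b - omega_M M a)) {a..b}"
  using om_int[of 1 a b] by simp

lemma om_cmp_le:
  assumes l: "0 < l" and a: "0 < a" and ab: "a \<le> b"
    and h: "\<And>u. u \<in> {a..b} \<Longrightarrow> real (cnt (l * u)) \<le> K * real (cnt u)"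
  shows "omega_M M (l * b) - omega_M M (l * a) \<le> K * (omega_M M b - omega_M M a)"
proof (rule has_integral_le[OF om_int[OF l a ab] has_integral_mult_right[OF om_int1[OF a ab]]])
  fix u assume u: "u \<in> {a..b}"
  then have "u > 0" using a by simp
  then have "real (cnt (l * u)) / u \<le> (K * real (cnt u)) / u"
    using h[OF u] by (intro divide_right_mono) auto
  then show "real (cnt (l * u)) / u \<le> K * (real (cnt u) / u)" by simp
qed

lemma om_cmp_ge:
  assumes l: "0 < l" and a: "0 < a" and ab: "a \<le> b"
    and h: "\<And>u. u \<in> {a..b} \<Longrightarrow> K * real (cnt u) \<le> real (cnt (l * u))"
  shows "K * (omega_M M b - omega_M M a) \<le> omega_M M (l * b) - omega_M M (l * a)"
proof (rule has_integral_le[OF has_integral_mult_right[OF om_int1[OF a ab]] om_int[OF l a ab]])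
  fix u assume u: "u \<in> {a..b}"
  then have "u > 0" using a by simp
  then have "(K * real (cnt u)) / u \<le> real (cnt (l * u)) / u"
    using h[OF u] by (intro divide_right_mono) auto
  then show "K * (real (cnt u) / u) \<le> real (cnt (l * u)) / u" by simp
qed

lemma ln_int: "0 < (a::real) \<Longrightarrow> a \<le> b \<Longrightarrow> ((\<lambda>u. 1 / u) has_integral (ln b - ln a)) {a..b}"
proof -
  assume a: "0 < a" and ab: "a \<le> b"
  show ?thesis
  proof (rule fundamental_theorem_of_calculus_interior_strong[of "{}" a b ln "\<lambda>u. 1 / u"])
    show "finite ({}::real set)" by simp
    show "a \<le> b" by (rule ab)
  next
    show "continuous_on {a..b} ln" using a by (intro continuous_intros) auto
  next
    fix x assume x: "x \<in> {a<..<b} - {}"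
    then have "x > 0" using a by simp
    then have "(ln has_real_derivative inverse x) (at x)" by (rule DERIV_ln)
    then show "(ln has_vector_derivative 1 / x) (at x)"
      by (simp add: has_real_derivative_iff_has_vector_derivative divide_inverse)
  qed
qed

lemma om_gap:
  assumes t: "0 < t" and lam: "1 \<le> lam"
  shows "real (cnt t) * ln lam \<le> omega_M M (lam * t) - omega_M M t"
    and "omega_M M (lam * t) - omega_M M t \<le> real (cnt (lam * t)) * ln lam"
proof -
  have tt: "t \<le> lam * t" using t lam by simp
  have I: "((\<lambda>u. real (cnt u) / u) has_integral (omega_M M (lam * t) - omega_M M t)) {t..lam * t}"
    by (rule om_int1[OF t tt])
  have L: "((\<lambda>u. 1 / u) has_integral (ln (lam * t) - ln t)) {t..lam * t}" by (rule ln_int[OF t tt])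
  have lnl: "ln (lam * t) - ln t = ln lam" using t lam by (simp add: ln_mult)
  show "real (cnt t) * ln lam \<le> omega_M M (lam * t) - omega_M M t"
  proof (rule has_integral_le[OF has_integral_mult_right[OF L] I, of "real (cnt t)", unfolded lnl])
    fix u assume u: "u \<in> {t..lam * t}"
    then have "u > 0" using t by simp
    moreover have "real (cnt t) \<le> real (cnt u)" using u cnt_mono by simp
    ultimately show "real (cnt t) * (1 / u) \<le> real (cnt u) / u" by (simp add: divide_right_mono)
  qed
  show "omega_M M (lam * t) - omega_M M t \<le> real (cnt (lam * t)) * ln lam"
  proof (rule has_integral_le[OF I has_integral_mult_right[OF L], of "real (cnt (lam * t))", unfolded lnl])
    fix u assume u: "u \<in> {t..lam * t}"
    then have "u > 0" using t by simp
    moreover have "real (cnt u) \<le> real (cnt (lam * t))" using u cnt_mono by simp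
    ultimately show "real (cnt u) / u \<le> real (cnt (lam * t)) * (1 / u)" by (simp add: divide_right_mono)
  qed
qed

end



definition Aprop :: "(real \<Rightarrow> real) \<Rightarrow> real \<Rightarrow> bool" where
  "Aprop f a \<longleftrightarrow> (\<exists>C>0. \<forall>\<Lambda>>1.
      Limsup at_top (\<lambda>x. SUP l\<in>{1..\<Lambda>}. ereal (f (l * x) / (l powr a * f x))) \<le> ereal C)"

definition Bprop :: "(real \<Rightarrow> real) \<Rightarrow> real \<Rightarrow> bool" where
  "Bprop f b \<longleftrightarrow> (\<exists>D>0. \<forall>\<Lambda>>1.
      Liminf at_top (\<lambda>x. INF l\<in>{1..\<Lambda>}. ereal (f (l * x) / (l powr b * f x))) \<ge> ereal D)"

lemma ar1:
  fixes y A B p w k c w0 :: real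
  assumes p: "0 < p" and w: "0 < w" and k: "0 < k" "k \<le> p" and AB: "A \<le> B" and Bk: "B \<le> k * w"
    and y: "y - A \<le> c * p * (w - w0)" and w0: "0 \<le> w0" and c: "0 \<le> c"
  shows "y / (p * w) \<le> c + 1"
proof -
  have 1: "k * w \<le> p * w" using k w by (intro mult_right_mono) auto
  have 2: "0 \<le> c * p * w0" using c p w0 by simp
  have 3: "c * p * (w - w0) = c * p * w - c * p * w0" by (simp add: algebra_simps)
  have 4: "(c + 1) * (p * w) = c * p * w + p * w" by (simp add: algebra_simps)
  have "y \<le> A + c * p * (w - w0)" using y by simp
  also have "\<dots> \<le> B + c * p * (w - w0)" using AB by simp
  also have "\<dots> \<le> k * w + c * p * (w - w0)" using Bk by simp
  also have "\<dots> \<le> p * w + c * p * (w - w0)" using 1 by simp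
  also have "\<dots> \<le> p * w + c * p * w" using 2 3 by simp
  also have "\<dots> = (c + 1) * (p * w)" by (simp add: algebra_simps)
  finally have "y \<le> (c + 1) * (p * w)" .
  then show ?thesis using p w by (simp add: pos_divide_le_eq)
qed

lemma ar2:
  fixes y A p w w0 d :: real
  assumes p: "0 < p" and w: "0 < w" and A: "0 \<le> A" and w0: "0 \<le> w0" and ww: "2 * w0 \<le> w"
    and d: "0 \<le> d" and y: "d * p * (w - w0) \<le> y - A"
  shows "d / 2 \<le> y / (p * w)"
proof -
  have dp: "0 \<le> d * p" using d p by simp
  have "d * p * (w / 2) \<le> d * p * (w - w0)" using ww by (intro mult_left_mono[OF _ dp]) simp
  also have "\<dots> \<le> y - A" by (rule y)
  also have "\<dots> \<le> y" using A by simp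
  finally have "d / 2 * (p * w) \<le> y" by (simp add: algebra_simps)
  then show ?thesis using p w by (simp add: pos_le_divide_eq)
qed

lemma ar3:
  fixes P Q n N1 :: real
  assumes "0 < P" "P \<le> Q" "0 < n" "n \<le> N1"
  shows "1 / Q \<le> N1 / (P * n)"
proof -
  have Q: "0 < Q" using assms by simp
  have "P / Q \<le> 1" using assms Q by simp
  then have "P / Q * n \<le> 1 * n" using assms by (intro mult_right_mono) auto
  then have "1 / Q * (P * n) \<le> N1" using assms by simp
  then show ?thesis using assms by (simp add: pos_le_divide_eq)
qed

lemma ar4:
  fixes L d q T Ox W V N1 n :: real
  assumes L: "0 < L" and dq: "0 \<le> d * q" and Ox: "0 \<le> Ox"
    and h1: "W - T \<le> N1 * L" and h2: "2 * T \<le> W" and h3: "d * q * V \<le> W" and h4: "n * L \<le> V - Ox"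
  shows "(d / 2) * q * n \<le> N1"
proof -
  have a: "W \<le> 2 * (N1 * L)" using h1 h2 by linarith
  have b: "n * L \<le> V" using h4 Ox by linarith
  have "d * q * (n * L) \<le> d * q * V" by (rule mult_left_mono[OF b dq])
  then have "d * q * (n * L) \<le> 2 * (N1 * L)" using h3 a by linarith
  then have "((d / 2) * q * n) * L \<le> N1 * L" by (simp add: algebra_simps)
  then show ?thesis using L by simp
qed

lemma ar5:
  fixes P Q n N1 e :: real
  assumes "0 < P" "0 < Q" "0 < n" "(e * (P / Q)) * n \<le> N1"
  shows "e / Q \<le> N1 / (P * n)"
proof -
  have "e / Q * (P * n) = (e * (P / Q)) * n" by simp
  then have "e / Q * (P * n) \<le> N1" using assms by simp
  then show ?thesis using assms by (simp add: pos_le_divide_eq)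
qed

context wseq begin

lemma nu_pos: "x \<ge> quotients M 0 \<Longrightarrow> nu_m (quotients M) x > 0"
  using cnt_pos by (simp add: nu_eq)

lemma alpha_incl: "Aprop (nu_m (quotients M)) a \<Longrightarrow> Aprop (omega_M M) a"
proof -
  assume "Aprop (nu_m (quotients M)) a"
  then obtain C where C0: "C > 0" and C: "\<And>\<Lambda>. \<Lambda> > 1 \<Longrightarrow>
      Limsup at_top (\<lambda>x. SUP l\<in>{1..\<Lambda>}. ereal (nu_m (quotients M) (l * x) / (l powr a * nu_m (quotients M) x))) \<le> ereal C"
    unfolding Aprop_def by blast
  have q0: "quotients M 0 > 0" by (rule m_pos)
  have "\<forall>\<Lambda>>1. Limsup at_top (\<lambda>x. SUP l\<in>{1..\<Lambda>}. ereal (omega_M M (l * x) / (l powr a * omega_M M x))) \<le> ereal (C + 2)"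
  proof (intro allI impI)
    fix \<Lambda> :: real assume L: "\<Lambda> > 1"
    have "Limsup at_top (\<lambda>x. SUP l\<in>{1..\<Lambda>}. ereal (nu_m (quotients M) (l * x) / (l powr a * nu_m (quotients M) x))) < ereal (C + 1)"
      using C[OF L] by (rule order.strict_trans1) simp
    then have ev1: "eventually (\<lambda>x. (SUP l\<in>{1..\<Lambda>}. ereal (nu_m (quotients M) (l * x) / (l powr a * nu_m (quotients M) x))) < ereal (C + 1)) at_top"
      by (rule Limsup_lessD)
    obtain x0 where x0: "\<And>x. x \<ge> x0 \<Longrightarrow> (SUP l\<in>{1..\<Lambda>}. ereal (nu_m (quotients M) (l * x) / (l powr a * nu_m (quotients M) x))) < ereal (C + 1) \<and> x \<ge> quotients M 0"
      using eventually_conj[OF ev1 eventually_ge_at_top[of "quotients M 0"]] unfolding eventually_at_top_linorder by blast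
    define y0 where "y0 = max x0 (quotients M 0)"
    have y0: "y0 > 0" "y0 \<ge> x0" unfolding y0_def using q0 by auto
    have bound: "real (cnt (l * u)) \<le> ((C + 1) * l powr a) * real (cnt u)" if u: "u \<in> {y0..x}" and l: "l \<in> {1..\<Lambda>}" for u l x
    proof -
      have ux: "u \<ge> x0" using u y0 by simp
      have "ereal (nu_m (quotients M) (l * u) / (l powr a * nu_m (quotients M) u)) \<le> (SUP l\<in>{1..\<Lambda>}. ereal (nu_m (quotients M) (l * u) / (l powr a * nu_m (quotients M) u)))"
        by (rule SUP_upper[OF l])
      also have "\<dots> < ereal (C + 1)" using x0[OF ux] by blast
      finally have r: "nu_m (quotients M) (l * u) / (l powr a * nu_m (quotients M) u) < C + 1" by simp
      have pos: "0 < l powr a * nu_m (quotients M) u" using l nu_pos x0[OF ux] by simp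
      have "nu_m (quotients M) (l * u) < (C + 1) * (l powr a * nu_m (quotients M) u)"
        using r pos by (simp add: pos_divide_less_eq)
      then show ?thesis by (simp add: nu_eq mult.assoc)
    qed
    define k where "k = min 1 (\<Lambda> powr a)"
    have k0: "k > 0" unfolding k_def using L by simp
    have kl: "k \<le> l powr a" if l: "l \<in> {1..\<Lambda>}" for l
    proof (cases "a \<ge> 0")
      case True
      then have "1 \<le> l powr a" using l by (intro ge_one_powr_ge_zero) auto
      then show ?thesis unfolding k_def by simp
    next
      case False
      then have "\<Lambda> powr a \<le> l powr a" using l by (intro powr_mono2') auto
      then show ?thesis unfolding k_def by simp
    qed
    have ev3: "eventually (\<lambda>x. x \<ge> y0 \<and> omega_M M x \<ge> omega_M M (\<Lambda> * y0) / k + 1) at_top"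
      by (rule eventually_conj[OF eventually_ge_at_top om_tendsto])
    show "Limsup at_top (\<lambda>x. SUP l\<in>{1..\<Lambda>}. ereal (omega_M M (l * x) / (l powr a * omega_M M x))) \<le> ereal (C + 2)"
    proof (rule Limsup_bounded, rule eventually_mono[OF ev3], rule SUP_least)
      fix x l assume x: "y0 \<le> x \<and> omega_M M (\<Lambda> * y0) / k + 1 \<le> omega_M M x" and l: "l \<in> {1..\<Lambda>}"
      have l0: "0 < l" using l by simp
      have cmp: "omega_M M (l * x) - omega_M M (l * y0) \<le> ((C + 1) * l powr a) * (omega_M M x - omega_M M y0)"
        by (rule om_cmp_le[OF l0 y0(1)]) (use x bound l in auto)
      have B0: "0 \<le> omega_M M (\<Lambda> * y0)" by (rule om_nonneg)
      have "omega_M M (\<Lambda> * y0) / k \<le> omega_M M x" using x by simp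
      then have Bk: "omega_M M (\<Lambda> * y0) \<le> k * omega_M M x" using k0 by (simp add: pos_divide_le_eq mult.commute)
      have w0: "0 < omega_M M x" using x B0 k0 by (smt (verit) divide_nonneg_pos)
      have AB: "omega_M M (l * y0) \<le> omega_M M (\<Lambda> * y0)" using l y0 by (intro om_mono mult_right_mono) auto
      have "omega_M M (l * x) / (l powr a * omega_M M x) \<le> (C + 1) + 1"
        by (rule ar1[OF _ w0 k0 kl[OF l] AB Bk _ om_nonneg]) (use l C0 cmp in \<open>auto simp: mult.assoc\<close>)
      then show "ereal (omega_M M (l * x) / (l powr a * omega_M M x)) \<le> ereal (C + 2)" by simp
    qed
  qed
  then show ?thesis unfolding Aprop_def using C0 by (intro exI[of _ "C + 2"]) auto
qed

lemma beta_incl1: "Bprop (nu_m (quotients M)) b \<Longrightarrow> Bprop (omega_M M) b"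
proof -
  assume "Bprop (nu_m (quotients M)) b"
  then obtain D where D0: "D > 0" and D: "\<And>\<Lambda>. \<Lambda> > 1 \<Longrightarrow>
      Liminf at_top (\<lambda>x. INF l\<in>{1..\<Lambda>}. ereal (nu_m (quotients M) (l * x) / (l powr b * nu_m (quotients M) x))) \<ge> ereal D"
    unfolding Bprop_def by blast
  have q0: "quotients M 0 > 0" by (rule m_pos)
  have "\<forall>\<Lambda>>1. Liminf at_top (\<lambda>x. INF l\<in>{1..\<Lambda>}. ereal (omega_M M (l * x) / (l powr b * omega_M M x))) \<ge> ereal (D / 4)"
  proof (intro allI impI)
    fix \<Lambda> :: real assume L: "\<Lambda> > 1"
    have "ereal (D / 2) < Liminf at_top (\<lambda>x. INF l\<in>{1..\<Lambda>}. ereal (nu_m (quotients M) (l * x) / (l powr b * nu_m (quotients M) x)))"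
      using order.strict_trans2[OF _ D[OF L], of "ereal (D / 2)"] D0 by simp
    then have ev1: "eventually (\<lambda>x. (INF l\<in>{1..\<Lambda>}. ereal (nu_m (quotients M) (l * x) / (l powr b * nu_m (quotients M) x))) > ereal (D / 2)) at_top"
      by (rule less_LiminfD)
    obtain x0 where x0: "\<And>x. x \<ge> x0 \<Longrightarrow> (INF l\<in>{1..\<Lambda>}. ereal (nu_m (quotients M) (l * x) / (l powr b * nu_m (quotients M) x))) > ereal (D / 2) \<and> x \<ge> quotients M 0"
      using eventually_conj[OF ev1 eventually_ge_at_top[of "quotients M 0"]] unfolding eventually_at_top_linorder by blast
    define y0 where "y0 = max x0 (quotients M 0)"
    have y0: "y0 > 0" "y0 \<ge> x0" unfolding y0_def using q0 by auto
    have bound: "((D / 2) * l powr b) * real (cnt u) \<le> real (cnt (l * u))" if u: "u \<in> {y0..x}" and l: "l \<in> {1..\<Lambda>}" for u l x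
    proof -
      have ux: "u \<ge> x0" using u y0 by simp
      have "ereal (D / 2) < (INF l\<in>{1..\<Lambda>}. ereal (nu_m (quotients M) (l * u) / (l powr b * nu_m (quotients M) u)))"
        using x0[OF ux] by blast
      also have "\<dots> \<le> ereal (nu_m (quotients M) (l * u) / (l powr b * nu_m (quotients M) u))"
        by (rule INF_lower[OF l])
      finally have r: "D / 2 < nu_m (quotients M) (l * u) / (l powr b * nu_m (quotients M) u)" by simp
      have pos: "0 < l powr b * nu_m (quotients M) u" using l nu_pos x0[OF ux] by simp
      have "(D / 2) * (l powr b * nu_m (quotients M) u) < nu_m (quotients M) (l * u)"
        using r pos by (simp add: pos_less_divide_eq)
      then show ?thesis by (simp add: nu_eq mult.assoc)
    qed
    have ev3: "eventually (\<lambda>x. x \<ge> y0 \<and> omega_M M x \<ge> 2 * omega_M M y0 + 1) at_top"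
      by (rule eventually_conj[OF eventually_ge_at_top om_tendsto])
    show "Liminf at_top (\<lambda>x. INF l\<in>{1..\<Lambda>}. ereal (omega_M M (l * x) / (l powr b * omega_M M x))) \<ge> ereal (D / 4)"
    proof (rule Liminf_bounded, rule eventually_mono[OF ev3], rule INF_greatest)
      fix x l assume x: "y0 \<le> x \<and> 2 * omega_M M y0 + 1 \<le> omega_M M x" and l: "l \<in> {1..\<Lambda>}"
      have l0: "0 < l" using l by simp
      have cmp: "((D / 2) * l powr b) * (omega_M M x - omega_M M y0) \<le> omega_M M (l * x) - omega_M M (l * y0)"
        by (rule om_cmp_ge[OF l0 y0(1)]) (use x bound l in auto)
      have w00: "0 \<le> omega_M M y0" by (rule om_nonneg)
      have w0: "0 < omega_M M x" using x w00 by linarith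
      have ww: "2 * omega_M M y0 \<le> omega_M M x" using x by linarith
      have "(D / 2) / 2 \<le> omega_M M (l * x) / (l powr b * omega_M M x)"
        by (rule ar2[OF _ w0 om_nonneg w00 ww]) (use l D0 cmp in \<open>auto simp: mult.assoc\<close>)
      then show "ereal (D / 4) \<le> ereal (omega_M M (l * x) / (l powr b * omega_M M x))" by simp
    qed
  qed
  then show ?thesis unfolding Bprop_def using D0 by (intro exI[of _ "D / 4"]) auto
qed

lemma beta_incl2_nonpos: "b \<le> 0 \<Longrightarrow> Bprop (nu_m (quotients M)) b"
proof -
  assume b: "b \<le> 0"
  have q0: "quotients M 0 > 0" by (rule m_pos)
  have "\<forall>\<Lambda>>1. Liminf at_top (\<lambda>x. INF l\<in>{1..\<Lambda>}. ereal (nu_m (quotients M) (l * x) / (l powr b * nu_m (quotients M) x))) \<ge> ereal 1"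
  proof (intro allI impI)
    fix \<Lambda> :: real assume L: "\<Lambda> > 1"
    show "Liminf at_top (\<lambda>x. INF l\<in>{1..\<Lambda>}. ereal (nu_m (quotients M) (l * x) / (l powr b * nu_m (quotients M) x))) \<ge> ereal 1"
    proof (rule Liminf_bounded, rule eventually_mono[OF eventually_ge_at_top[of "quotients M 0"]], rule INF_greatest)
      fix x l assume x: "quotients M 0 \<le> x" and l: "l \<in> {1..\<Lambda>}"
      have n0: "0 < nu_m (quotients M) x" by (rule nu_pos[OF x])
      have x0: "0 < x" using x q0 by simp
      have "x \<le> l * x" using l x0 by simp
      then have nn: "nu_m (quotients M) x \<le> nu_m (quotients M) (l * x)" by (simp add: nu_eq cnt_mono)
      have "l powr b \<le> l powr 0" using l b by (intro powr_mono) auto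
      then have lb1: "l powr b \<le> 1" using l by simp
      have lb0: "0 < l powr b" using l by simp
      have "l powr b * nu_m (quotients M) x \<le> 1 * nu_m (quotients M) x" using lb1 n0 by (intro mult_right_mono) auto
      then have "1 * (l powr b * nu_m (quotients M) x) \<le> nu_m (quotients M) (l * x)" using nn by simp
      then have "1 \<le> nu_m (quotients M) (l * x) / (l powr b * nu_m (quotients M) x)"
        using lb0 n0 by (simp add: pos_le_divide_eq)
      then show "ereal 1 \<le> ereal (nu_m (quotients M) (l * x) / (l powr b * nu_m (quotients M) x))" by simp
    qed
  qed
  then show ?thesis unfolding Bprop_def by (intro exI[of _ 1]) auto
qed

lemma beta_incl2: "Bprop (omega_M M) b \<Longrightarrow> Bprop (nu_m (quotients M)) b"
proof (cases "b \<le> 0")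
  case True then show ?thesis by (rule beta_incl2_nonpos)
next
  case False
  then have b: "b > 0" by simp
  assume "Bprop (omega_M M) b"
  then obtain D where D0: "D > 0" and D: "\<And>\<Lambda>. \<Lambda> > 1 \<Longrightarrow>
      Liminf at_top (\<lambda>x. INF l\<in>{1..\<Lambda>}. ereal (omega_M M (l * x) / (l powr b * omega_M M x))) \<ge> ereal D"
    unfolding Bprop_def by blast
  have q0: "quotients M 0 > 0" by (rule m_pos)
  define lam where "lam = max 2 ((4 / D) powr (1 / b))"
  have lam1: "lam > 1" "1 \<le> lam" "lam > 0" unfolding lam_def by auto
  have "((4 / D) powr (1 / b)) powr b \<le> lam powr b"
    unfolding lam_def using b by (intro powr_mono2) auto
  moreover have "((4 / D) powr (1 / b)) powr b = 4 / D" using b D0 by (simp add: powr_powr)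
  ultimately have lamb: "4 / D \<le> lam powr b" by simp
  have Q0: "0 < lam powr b" using lam1 by simp
  have dl2: "2 \<le> (D / 2) * lam powr b"
  proof -
    have "(D / 2) * (4 / D) \<le> (D / 2) * lam powr b" using lamb D0 by (intro mult_left_mono) auto
    then show ?thesis using D0 by simp
  qed
  define D' where "D' = min 1 (D / 4) / lam powr b"
  have D'0: "D' > 0" unfolding D'_def using D0 Q0 by simp
  have D'1: "D' \<le> 1 / lam powr b" unfolding D'_def using Q0 by (intro divide_right_mono) auto
  have D'2: "D' \<le> (D / 4) / lam powr b" unfolding D'_def using Q0 by (intro divide_right_mono) auto
  have "\<forall>\<Lambda>>1. Liminf at_top (\<lambda>x. INF l\<in>{1..\<Lambda>}. ereal (nu_m (quotients M) (l * x) / (l powr b * nu_m (quotients M) x))) \<ge> ereal D'"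
  proof (intro allI impI)
    fix \<Lambda> :: real assume L: "\<Lambda> > 1"
    define L2 where "L2 = max \<Lambda> lam"
    have L2: "L2 > 1" "\<Lambda> \<le> L2" "lam \<le> L2" unfolding L2_def using L by auto
    have "ereal (D / 2) < Liminf at_top (\<lambda>x. INF l\<in>{1..L2}. ereal (omega_M M (l * x) / (l powr b * omega_M M x)))"
      using order.strict_trans2[OF _ D[OF L2(1)], of "ereal (D / 2)"] D0 by simp
    then have ev1: "eventually (\<lambda>x. (INF l\<in>{1..L2}. ereal (omega_M M (l * x) / (l powr b * omega_M M x))) > ereal (D / 2)) at_top"
      by (rule less_LiminfD)
    have "eventually (\<lambda>x. (INF l\<in>{1..L2}. ereal (omega_M M (l * x) / (l powr b * omega_M M x))) > ereal (D / 2)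
        \<and> (x \<ge> quotients M 0 \<and> omega_M M x \<ge> 1)) at_top"
      by (rule eventually_conj[OF ev1 eventually_conj[OF eventually_ge_at_top om_tendsto]])
    then obtain x1 where x1: "\<And>x. x \<ge> x1 \<Longrightarrow> (INF l\<in>{1..L2}. ereal (omega_M M (l * x) / (l powr b * omega_M M x))) > ereal (D / 2)
        \<and> (x \<ge> quotients M 0 \<and> omega_M M x \<ge> 1)"
      unfolding eventually_at_top_linorder by blast
    have key: "(D / 2) * l powr b * omega_M M y < omega_M M (l * y)" if y: "y \<ge> x1" and l: "l \<in> {1..L2}" for y l
    proof -
      have "ereal (D / 2) < (INF l\<in>{1..L2}. ereal (omega_M M (l * y) / (l powr b * omega_M M y)))"
        using x1[OF y] by blast
      also have "\<dots> \<le> ereal (omega_M M (l * y) / (l powr b * omega_M M y))"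
        by (rule INF_lower[OF l])
      finally have r: "D / 2 < omega_M M (l * y) / (l powr b * omega_M M y)" by simp
      have pos: "0 < l powr b * omega_M M y" using l x1[OF y] by simp
      have "(D / 2) * (l powr b * omega_M M y) < omega_M M (l * y)"
        using r pos by (simp add: pos_less_divide_eq)
      then show ?thesis by (simp add: mult.assoc)
    qed
    show "Liminf at_top (\<lambda>x. INF l\<in>{1..\<Lambda>}. ereal (nu_m (quotients M) (l * x) / (l powr b * nu_m (quotients M) x))) \<ge> ereal D'"
    proof (rule Liminf_bounded, rule eventually_mono[OF eventually_ge_at_top[of x1]], rule INF_greatest)
      fix x \<mu> assume x: "x1 \<le> x" and mu: "\<mu> \<in> {1..\<Lambda>}"
      have xq: "quotients M 0 \<le> x" using x1[OF x] by blast
      have x0: "0 < x" using xq q0 by simp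
      have n0: "0 < real (cnt x)" using cnt_pos[OF xq] by simp
      have P0: "0 < \<mu> powr b" using mu by simp
      have "D' \<le> real (cnt (\<mu> * x)) / (\<mu> powr b * real (cnt x))"
      proof (cases "\<mu> \<le> lam")
        case True
        have PQ: "\<mu> powr b \<le> lam powr b" using True mu b by (intro powr_mono2) auto
        have "x \<le> \<mu> * x" using mu x0 by simp
        then have nn: "real (cnt x) \<le> real (cnt (\<mu> * x))" by (simp add: cnt_mono)
        have "1 / lam powr b \<le> real (cnt (\<mu> * x)) / (\<mu> powr b * real (cnt x))"
          by (rule ar3[OF P0 PQ n0 nn])
        then show ?thesis using D'1 by simp
      next
        case False
        then have ml: "lam < \<mu>" by simp
        define r where "r = \<mu> / lam"
        have r1a: "1 \<le> r" unfolding r_def using ml lam1 by simp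
        have "\<mu> / lam \<le> \<mu> / 1" using lam1 mu by (intro divide_left_mono) auto
        then have "r \<le> L2" unfolding r_def using mu L2 by simp
        note r1 = r1a this
        define t where "t = r * x"
        have tx: "x \<le> t" unfolding t_def using r1 x0 by simp
        have t0: "0 < t" using tx x0 by simp
        have lt: "lam * t = \<mu> * x" unfolding t_def r_def using lam1 by simp
        have rl: "r * (lam * x) = \<mu> * x" unfolding r_def using lam1 by simp
        have lamL2: "lam \<in> {1..L2}" using lam1 L2 by simp
        have k1: "(D / 2) * lam powr b * omega_M M t < omega_M M (\<mu> * x)"
          using key[OF order.trans[OF x tx] lamL2] lt by simp
        have "2 * omega_M M t \<le> (D / 2) * lam powr b * omega_M M t"
          using dl2 om_nonneg[of t] by (intro mult_right_mono) auto
        then have h2: "2 * omega_M M t \<le> omega_M M (\<mu> * x)" using k1 by linarith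
        have h1: "omega_M M (\<mu> * x) - omega_M M t \<le> real (cnt (\<mu> * x)) * ln lam"
          using om_gap(2)[OF t0 lam1(2)] lt by simp
        have lx: "x1 \<le> lam * x" using x lam1 x0 by (smt (verit) mult_le_cancel_right1)
        have h3: "(D / 2) * r powr b * omega_M M (lam * x) \<le> omega_M M (\<mu> * x)"
          using key[OF lx] r1 rl by (smt (verit) atLeastAtMost_iff)
        have h4: "real (cnt x) * ln lam \<le> omega_M M (lam * x) - omega_M M x"
          by (rule om_gap(1)[OF x0 lam1(2)])
        have Lp: "0 < ln lam" using lam1 by simp
        have dq: "0 \<le> (D / 2) * r powr b" using D0 by simp
        have "((D / 2) / 2) * r powr b * real (cnt x) \<le> real (cnt (\<mu> * x))"
          by (rule ar4[OF Lp dq om_nonneg h1 h2 h3 h4])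
        moreover have "r powr b = \<mu> powr b / lam powr b" unfolding r_def by (rule powr_divide)
        ultimately have "((D / 4) * (\<mu> powr b / lam powr b)) * real (cnt x) \<le> real (cnt (\<mu> * x))" by simp
        then have "(D / 4) / lam powr b \<le> real (cnt (\<mu> * x)) / (\<mu> powr b * real (cnt x))"
          by (rule ar5[OF P0 Q0 n0])
        then show ?thesis using D'2 by simp
      qed
      then show "ereal D' \<le> ereal (nu_m (quotients M) (\<mu> * x) / (\<mu> powr b * nu_m (quotients M) x))"
        by (simp add: nu_eq)
    qed
  qed
  then show ?thesis unfolding Bprop_def using D'0 by (intro exI[of _ D']) auto
qed

end

theorem theorem4p4:
  fixes M :: "nat \<Rightarrow> real"
  assumes "weight_sequence M"
  shows "alpha_index (nu_m (quotients M)) \<ge> alpha_index (omega_M M)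
    \<and> beta_index (nu_m (quotients M)) = beta_index (omega_M M)"
proof -
  interpret wseq M by (rule wseq.intro) (rule assms)
  have ai: "alpha_index f = Inf {ereal a | a. Aprop f a}" for f
    unfolding alpha_index_def Aprop_def by (rule refl)
  have bi: "beta_index f = Sup {ereal b | b. Bprop f b}" for f
    unfolding beta_index_def Bprop_def by (rule refl)
  have sub: "{ereal a | a. Aprop (nu_m (quotients M)) a} \<subseteq> {ereal a | a. Aprop (omega_M M) a}"
    using alpha_incl by blast
  have 1: "alpha_index (omega_M M) \<le> alpha_index (nu_m (quotients M))"
    unfolding ai by (rule Inf_superset_mono[OF sub])
  have eqv: "Bprop (nu_m (quotients M)) b \<longleftrightarrow> Bprop (omega_M M) b" for b
    using beta_incl1 beta_incl2 by blast
  have 2: "beta_index (nu_m (quotients M)) = beta_index (omega_M M)"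
    unfolding bi eqv by (rule refl)
  show ?thesis using 1 2 by simp
qed

end
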